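(* Let $a>0$, let $\lambda,\mu\in\mathbb{C}$ with $0<\operatorname{Re}(\mu)<\operatorname{Re}(\lambda)$, and let $y\in\mathbb{C}$. Put $D(x)=x+a+\sqrt{x^{2}+2ax}$ for $x>0$. Then \[ \int_{0}^{\infty}x^{\mu-1}D(x)^{-\lambda}\left[I_{0}\!\left(\frac{y}{D(x)}\right)+\mathbf{L}_{0}\!\left(\frac{y}{D(x)}\right)\right]dx =\frac{2^{1-\mu}a^{\mu-\lambda}\Gamma(2\mu)}{\sqrt{\pi}}\; {}_{3}\Psi_{3}\!\left[\begin{array}{c}(\tfrac12,\tfrac12),\ (\lambda+1,1),\ (\lambda-\mu,1)\\ (1,\tfrac12),\ (\lambda,1),\ (1+\lambda+\mu,1)\end{array}\Bigg|\ \frac{y}{a}\right]. \]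
   Context: $I_{0}$ is the modified Bessel function of the first kind of order $0$ and $\mathbf{L}_{0}$ is the modified Struve function of order $0$. The generalized Wright function is ${}_{p}\Psi_{q}\!\left[\begin{array}{c}(a_i,\alpha_i)_{1,p}\\(b_j,\beta_j)_{1,q}\end{array}\Big|z\right]=\sum_{k=0}^{\infty}\frac{\prod_{i=1}^{p}\Gamma(a_i+\alpha_i k)}{\prod_{j=1}^{q}\Gamma(b_j+\beta_j k)}\frac{z^{k}}{k!}$, with $a_i,b_j\in\mathbb{C}$, $\alpha_i,\beta_j\in\mathbb{R}$. *)

theory Defs
  imports "HOL-Analysis.Analysis"
begin

definition besselI0 :: "complex \<Rightarrow> complex" where
  "besselI0 z = (\<Sum>k. (z / 2) ^ (2 * k) / (of_nat (fact k)) ^ 2)"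

definition struveL0 :: "complex \<Rightarrow> complex" where
  "struveL0 z = (\<Sum>k. (z / 2) ^ (2 * k + 1) / (Gamma (of_nat k + 3 / 2)) ^ 2)"

definition wrightPsi ::
  "(complex \<times> real) list \<Rightarrow> (complex \<times> real) list \<Rightarrow> complex \<Rightarrow> complex" where
  "wrightPsi as bs z =
     (\<Sum>k. (\<Prod>(a, \<alpha>)\<leftarrow>as. Gamma (a + of_real \<alpha> * of_nat k))
          / (\<Prod>(b, \<beta>)\<leftarrow>bs. Gamma (b + of_real \<beta> * of_nat k))
          * z ^ k / of_nat (fact k))"

end

theory Submission
  imports Defs "HOL-Analysis.Analysis"
begin


definition P :: "complex \<Rightarrow> real \<Rightarrow> complex" where
  "P s x = indicator {0<..} x *\<^sub>R (of_real x powr (s-1) * of_real (exp (-x)))"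

lemma P_meas[measurable]: "P s \<in> borel_measurable borel"
  unfolding P_def
  by (intro borel_measurable_continuous_on_indicator) (auto intro!: continuous_intros)

lemma P_int:
  assumes "Re s > 0"
  shows "integrable lborel (P s)" "integral\<^sup>L lborel (P s) = Gamma s"
proof -
  have 1: "set_integrable lebesgue {0<..} (\<lambda>t. complex_of_real t powr (s - 1) / of_real (exp t))"
    using absolutely_integrable_Gamma_integral'[OF assms] .
  have eq: "(\<lambda>t. indicator {0<..} t *\<^sub>R (complex_of_real t powr (s - 1) / of_real (exp t))) = P s"
    by (auto simp: P_def fun_eq_iff exp_minus field_simps)
  from 1 have "integrable lebesgue (P s)" unfolding set_integrable_def eq .
  then show "integrable lborel (P s)" by (simp add: integrable_completion)
  have "integral {0<..} (\<lambda>t. complex_of_real t powr (s - 1) / of_real (exp t)) = Gamma s"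
    using Gamma_integral_complex'[OF assms] by (simp add: integral_unique)
  with set_lebesgue_integral_eq_integral(2)[OF 1]
  have "integral\<^sup>L lebesgue (P s) = Gamma s" unfolding set_lebesgue_integral_def eq by simp
  then show "integral\<^sup>L lborel (P s) = Gamma s" by (simp add: integral_completion)
qed



lemma cpowr_pos: "x > 0 \<Longrightarrow> complex_of_real x powr z = exp (z * of_real (ln x))"
  by (simp add: powr_def Ln_of_real)

lemma Gamma_nz_re:
  assumes "Re z > 0" shows "Gamma z \<noteq> 0"
proof
  assume "Gamma z = 0"
  then have "z \<in> \<int>\<^sub>\<le>\<^sub>0" by (simp add: Gamma_eq_zero_iff)
  then obtain n where "z = of_int n" "n \<le> 0" by (auto elim!: nonpos_Ints_cases)
  then have "Re z = of_int n" by simp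
  with assms \<open>n \<le> 0\<close> show False by linarith
qed

definition Bf :: "complex \<Rightarrow> complex \<Rightarrow> real \<Rightarrow> complex" where
  "Bf s t w = indicator {0<..<1} w *\<^sub>R (of_real w powr (s-1) * of_real (1-w) powr (t-1))"

lemma Bf_meas[measurable]: "Bf s t \<in> borel_measurable borel"
  unfolding Bf_def
  by (intro borel_measurable_continuous_on_indicator) (auto intro!: continuous_intros)

lemma Bf_int:
  assumes "Re s > 0" "Re t > 0"
  shows "integrable lborel (Bf s t)"
proof (rule Bochner_Integration.integrable_bound[OF _ _ AE_I2])
  show "integrable lborel (\<lambda>w. indicator {0..1} w *\<^sub>R (w powr (Re s - 1) * (1 - w) powr (Re t - 1)))"
    using integrable_Beta[of "Re s" "Re t"] assms unfolding set_integrable_def by simp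
  show "Bf s t \<in> borel_measurable lborel" by simp
  fix w :: real
  show "norm (Bf s t w) \<le> norm (indicator {0..1} w *\<^sub>R (w powr (Re s - 1) * (1 - w) powr (Re t - 1)))"
    by (auto simp: Bf_def indicator_def norm_mult norm_powr_real_powr)
qed

lemma Beta_complex_integral:
  assumes s: "Re s > 0" and t: "Re t > 0"
  shows "integral\<^sup>L lborel (Bf s t) = Beta s t"
proof -
  define I where "I = integral\<^sup>L lborel (Bf s t)"
  define Q where "Q = (\<lambda>x u. P s x * P t (u - x))"
  have PI: "integrable lborel (P s)" "integrable lborel (P t)" using P_int s t by auto
  have "Gamma s * Gamma t = (\<integral>x. P s x * (\<integral>y. P t y \<partial>lborel) \<partial>lborel)"
    using P_int[OF s] P_int[OF t] by simp
  also have "\<dots> = (\<integral>x. (\<integral>u. Q x u \<partial>lborel) \<partial>lborel)"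
  proof (intro Bochner_Integration.integral_cong refl)
    fix x
    have "(\<integral>y. P t y \<partial>lborel) = (\<integral>u. P t (-x + 1 * u) \<partial>lborel)"
      using lborel_integral_real_affine[of 1 "P t" "-x"] by simp
    then show "P s x * (\<integral>y. P t y \<partial>lborel) = (\<integral>u. Q x u \<partial>lborel)"
      by (simp add: Q_def)
  qed
  also have "\<dots> = (\<integral>u. (\<integral>x. Q x u \<partial>lborel) \<partial>lborel)"
  proof (rule lborel_pair.Fubini_integral[symmetric])
    have meas: "(\<lambda>z. Q (fst z) (snd z)) \<in> borel_measurable (lborel \<Otimes>\<^sub>M lborel)"
      unfolding Q_def by measurable
    have "(\<integral>\<^sup>+z. ennreal (norm (Q (fst z) (snd z))) \<partial>(lborel \<Otimes>\<^sub>M lborel))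
        = (\<integral>\<^sup>+x. \<integral>\<^sup>+u. ennreal (norm (Q x u)) \<partial>lborel \<partial>lborel)"
      using meas by (subst lborel.nn_integral_fst[symmetric]) (auto simp: case_prod_beta')
    also have "\<dots> = (\<integral>\<^sup>+x. ennreal (norm (P s x)) * (\<integral>\<^sup>+u. ennreal (norm (P t u)) \<partial>lborel) \<partial>lborel)"
    proof (intro nn_integral_cong)
      fix x
      have "(\<integral>\<^sup>+u. ennreal (norm (P t u)) \<partial>lborel) = (\<integral>\<^sup>+u. ennreal (norm (P t (-x + 1 * u))) \<partial>lborel)"
        using nn_integral_real_affine[of "\<lambda>u. ennreal (norm (P t u))" 1 "-x"] by simp
      then show "(\<integral>\<^sup>+u. ennreal (norm (Q x u)) \<partial>lborel) = ennreal (norm (P s x)) * (\<integral>\<^sup>+u. ennreal (norm (P t u)) \<partial>lborel)"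
        by (simp add: Q_def norm_mult ennreal_mult nn_integral_cmult)
    qed
    also have "\<dots> = (\<integral>\<^sup>+x. ennreal (norm (P s x)) \<partial>lborel) * (\<integral>\<^sup>+u. ennreal (norm (P t u)) \<partial>lborel)"
      by (simp add: nn_integral_multc)
    also have "\<dots> < \<infinity>"
      using PI unfolding integrable_iff_bounded by (simp add: ennreal_mult_less_top)
    finally show "integrable (lborel \<Otimes>\<^sub>M lborel) (case_prod Q)"
      using meas unfolding integrable_iff_bounded by (simp add: case_prod_beta')
  qed
  also have "\<dots> = (\<integral>u. P (s + t) u * I \<partial>lborel)"
  proof (intro Bochner_Integration.integral_cong refl)
    fix u :: real
    show "(\<integral>x. Q x u \<partial>lborel) = P (s + t) u * I"
    proof (cases "u > 0")
      case False
      then have "\<And>x. Q x u = 0" by (auto simp: Q_def P_def indicator_def)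
      with False show ?thesis by (simp add: P_def)
    next
      case True
      have "(\<integral>x. Q x u \<partial>lborel) = \<bar>u\<bar> *\<^sub>R (\<integral>w. Q (0 + u * w) u \<partial>lborel)"
        using True by (intro lborel_integral_real_affine) auto
      also have "(\<lambda>w. Q (0 + u * w) u) = (\<lambda>w. (of_real u powr (s + t - 2) * of_real (exp (-u))) * Bf s t w)"
      proof
        fix w :: real
        show "Q (0 + u * w) u = (of_real u powr (s + t - 2) * of_real (exp (-u))) * Bf s t w"
        proof (cases "0 < w \<and> w < 1")
          case True
          have uw: "u - u * w = u * (1 - w)" by (simp add: algebra_simps)
          have w1: "1 - w > 0" using True by simp
          have e2: "- (u * (1 - w)) = u * w - u" by (simp add: algebra_simps)
          have "Q (0 + u * w) u = of_real (u*w) powr (s-1) * of_real (exp (-(u*w))) *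
              (of_real (u*(1-w)) powr (t-1) * of_real (exp (-(u*(1-w)))))"
            using True \<open>u > 0\<close> by (simp add: Q_def P_def uw e2 del: of_real_mult of_real_diff)
          also have "\<dots> = exp ((s-1) * of_real (ln u + ln w)) * exp (of_real (-(u*w))) *
              (exp ((t-1) * of_real (ln u + ln (1-w))) * exp (of_real (-(u*(1-w)))))"
            using True \<open>u > 0\<close> w1 by (simp only: cpowr_pos mult_pos_pos ln_mult) (simp flip: exp_of_real)
          also have "\<dots> = exp ((s-1) * of_real (ln u + ln w) + of_real (-(u*w)) +
              ((t-1) * of_real (ln u + ln (1-w)) + of_real (-(u*(1-w)))))"
            by (simp only: exp_add)
          also have "\<dots> = exp ((s + t - 2) * of_real (ln u) + of_real (-u) +
              ((s-1) * of_real (ln w) + (t-1) * of_real (ln (1-w))))"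
            by (rule arg_cong[where f=exp]) (simp add: algebra_simps)
          also have "\<dots> = (exp ((s + t - 2) * of_real (ln u)) * exp (of_real (-u))) *
              (exp ((s-1) * of_real (ln w)) * exp ((t-1) * of_real (ln (1-w))))"
            by (simp only: exp_add)
          also have "\<dots> = (of_real u powr (s + t - 2) * of_real (exp (-u))) * Bf s t w"
            using True \<open>u > 0\<close> w1 cpowr_pos[OF w1, of "t-1"] by (simp add: Bf_def cpowr_pos exp_of_real del: of_real_minus)
          finally show ?thesis .
        next
          case False
          then show ?thesis using \<open>u > 0\<close>
            by (auto simp: Q_def P_def Bf_def indicator_def zero_less_mult_iff mult_less_cancel_left1)
        qed
      qed
      also have "\<bar>u\<bar> *\<^sub>R (\<integral>w. (of_real u powr (s + t - 2) * of_real (exp (-u))) * Bf s t w \<partial>lborel)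
          = P (s + t) u * I"
      proof -
        have ue: "complex_of_real u = exp (of_real (ln u))" using True by (simp add: exp_of_real)
        have key: "complex_of_real u * of_real u powr (s + t - 2) = of_real u powr (s + t - 1)"
        proof -
          have "complex_of_real u * of_real u powr (s + t - 2) = exp (of_real (ln u) + (s + t - 2) * of_real (ln u))"
            using True by (subst ue) (simp add: cpowr_pos exp_add)
          also have "\<dots> = exp ((s + t - 1) * of_real (ln u))"
            by (rule arg_cong[where f=exp]) (simp add: algebra_simps)
          finally show ?thesis using True by (simp add: cpowr_pos)
        qed
        show ?thesis
          using True key by (simp add: I_def P_def scaleR_conv_of_real flip: mult.assoc)
      qed
      finally show ?thesis .
    qed
  qed
  also have "\<dots> = Gamma (s + t) * I"
    using P_int[of "s+t"] s t by simp
  finally have "Gamma s * Gamma t = Gamma (s + t) * I" .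
  moreover have "Gamma (s + t) \<noteq> 0"
    using s t by (intro Gamma_nz_re) simp
  ultimately show ?thesis unfolding I_def Beta_def by (simp add: field_simps)
qed



definition ee :: "nat \<Rightarrow> complex \<Rightarrow> complex" where
  "ee k z = (z / 2) ^ (2 * k) / (of_nat (fact k)) ^ 2"
definition od :: "nat \<Rightarrow> complex \<Rightarrow> complex" where
  "od k z = (z / 2) ^ (2 * k + 1) / (Gamma (of_nat k + 3 / 2)) ^ 2"

lemma besselI0_ee: "besselI0 z = (\<Sum>k. ee k z)"
  unfolding besselI0_def ee_def ..
lemma struveL0_od: "struveL0 z = (\<Sum>k. od k z)"
  unfolding struveL0_def od_def ..

lemma ee_bound: "norm (ee k z) \<le> inverse (fact k) * (norm z ^ 2 / 4) ^ k"
proof -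
  have f1: "(1::real) \<le> fact k" by simp
  have "norm (ee k z) = (norm z ^ 2 / 4) ^ k / (fact k) ^ 2"
    by (simp add: ee_def norm_divide norm_power power_mult power_divide norm_mult)
  also have "\<dots> \<le> (norm z ^ 2 / 4) ^ k / fact k"
    using f1 by (intro divide_left_mono) (auto simp: power2_eq_square)
  finally show ?thesis by (simp add: field_simps)
qed

lemma Gamma_lb: "Gamma (real k + 3/2) \<ge> fact k * (sqrt pi / 2)"
proof (induction k)
  case 0
  have "Gamma (3/2::real) = Gamma (1/2 + 1)" by simp
  also have "\<dots> = 1/2 * Gamma (1/2)" by (subst Gamma_plus1) auto
  finally show ?case by (simp add: Gamma_one_half_real)
next
  case (Suc k)
  have "Gamma (real (Suc k) + 3/2) = (real k + 3/2) * Gamma (real k + 3/2)"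
  proof -
    have "real k + 3/2 > 0" by simp
    then have "real k + 3/2 \<notin> \<int>\<^sub>\<le>\<^sub>0" using nonpos_Ints_nonpos by force
    then show ?thesis using Gamma_plus1[of "real k + 3/2"] by (simp add: add_ac)
  qed
  also have "\<dots> \<ge> (real k + 1) * (fact k * (sqrt pi / 2))"
    using Suc by (intro mult_mono) auto
  finally show ?case by (simp add: algebra_simps)
qed

lemma od_bound: "norm (od k z) \<le> (norm z / 2) * (4 / pi) * (inverse (fact k) * (norm z ^ 2 / 4) ^ k)"
proof -
  have g: "Gamma (of_nat k + 3 / 2 :: complex) = of_real (Gamma (real k + 3/2))"
    by (subst Gamma_complex_of_real[symmetric]) simp
  have lb: "Gamma (real k + 3/2) \<ge> fact k * (sqrt pi / 2)" by (rule Gamma_lb)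
  have pos: "0 < fact k * (sqrt pi / 2)" by simp
  have "(fact k * (sqrt pi / 2)) ^ 2 \<le> Gamma (real k + 3/2) ^ 2"
    using lb pos by (intro power_mono) auto
  moreover have "(fact k * (sqrt pi / 2)) ^ 2 = fact k ^ 2 * pi / 4"
    by (simp add: power_mult_distrib power_divide)
  moreover have "fact k * pi / 4 \<le> fact k ^ 2 * pi / 4"
    by (simp add: power2_eq_square)
  ultimately have lb2: "fact k * pi / 4 \<le> Gamma (real k + 3/2) ^ 2" by linarith
  have fp: "0 < fact k * pi / 4" by simp
  have gp: "Gamma (real k + 3/2) > 0" by (rule Gamma_real_pos) simp
  have "norm (od k z) = (norm z / 2) * (norm z ^ 2 / 4) ^ k / (Gamma (real k + 3/2) ^ 2)"
    using gp
    by (simp add: od_def g norm_divide norm_power power_mult power_divide power_add norm_mult)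
  also have "\<dots> \<le> (norm z / 2) * (norm z ^ 2 / 4) ^ k / (fact k * pi / 4)"
    by (rule divide_left_mono[OF lb2 _ mult_pos_pos[OF zero_less_power[OF gp] fp]]) simp
  also have "\<dots> = (norm z / 2) * (4 / pi) * (inverse (fact k) * (norm z ^ 2 / 4) ^ k)"
    by (simp add: field_simps)
  finally show ?thesis .
qed

lemma summable_expr: "summable (\<lambda>k. inverse (fact k) * (r::real) ^ k)"
  by (rule summable_exp)

lemma summable_ee: "summable (\<lambda>k. norm (ee k z))"
  by (rule summable_comparison_test[OF _ summable_expr[of "norm z ^ 2 / 4"]]) (auto intro!: exI ee_bound)

lemma summable_od: "summable (\<lambda>k. norm (od k z))"
proof -
  have "summable (\<lambda>k. (norm z / 2) * (4 / pi) * (inverse (fact k) * (norm z ^ 2 / 4) ^ k))"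
    by (intro summable_mult summable_expr)
  then show ?thesis by (rule summable_comparison_test'[where N=0]) (use od_bound[of _ z] in auto)
qed

lemma besselI0_meas[measurable]: "besselI0 \<in> borel_measurable borel"
proof (rule borel_measurable_LIMSEQ_metric)
  show "(\<lambda>z. \<Sum>k<n. ee k z) \<in> borel_measurable borel" for n
    unfolding ee_def by measurable
  show "(\<lambda>n. \<Sum>k<n. ee k z) \<longlonglongrightarrow> besselI0 z" for z
    unfolding besselI0_ee using summable_LIMSEQ summable_norm_cancel[OF summable_ee] by blast
qed

lemma struveL0_meas[measurable]: "struveL0 \<in> borel_measurable borel"
proof (rule borel_measurable_LIMSEQ_metric)
  show "(\<lambda>z. \<Sum>k<n. od k z) \<in> borel_measurable borel" for n
    unfolding od_def by measurable
  show "(\<lambda>n. \<Sum>k<n. od k z) \<longlonglongrightarrow> struveL0 z" for z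
    unfolding struveL0_od using summable_LIMSEQ summable_norm_cancel[OF summable_od] by blast
qed



lemma cpowr_shift_nat:
  assumes "x > 0"
  shows "complex_of_real x ^ m * of_real x powr z = of_real x powr (z + of_nat m)"
  using assms by (simp add: powr_add powr_nat)

lemma cpowr_shift_one:
  assumes "x > 0"
  shows "complex_of_real x * of_real x powr z = of_real x powr (z + 1)"
  using cpowr_shift_nat[OF assms, of 1 z] by simp

context
  fixes lam mu c :: complex
  assumes mu: "0 < Re mu" and lm: "Re mu < Re lam"
begin

definition Fv :: "real \<Rightarrow> complex" where
  "Fv v = indicator {0<..<1} v *\<^sub>R (of_real (1-v) powr (2*mu-1) * of_real v powr (lam-mu-1) * (1 + of_real v))"

lemma Fv_pow:
  "of_real v ^ m * Fv v = Bf (lam - mu + of_nat m) (2*mu) v + Bf (lam - mu + of_nat m + 1) (2*mu) v"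
proof (cases "0 < v \<and> v < 1")
  case True
  then have v: "v > 0" by simp
  have "of_real v ^ m * Fv v = of_real (1-v) powr (2*mu-1) * (of_real v ^ m * of_real v powr (lam-mu-1)) * (1 + of_real v)"
    using True by (simp add: Fv_def)
  also have "of_real v ^ m * of_real v powr (lam-mu-1) = of_real v powr (lam - mu + of_nat m - 1)"
    using cpowr_shift_nat[OF v] by (simp add: algebra_simps)
  also have "of_real (1-v) powr (2*mu-1) * of_real v powr (lam - mu + of_nat m - 1) * (1 + of_real v)
     = of_real v powr (lam - mu + of_nat m - 1) * of_real (1-v) powr (2*mu-1)
       + of_real (1-v) powr (2*mu-1) * (of_real v * of_real v powr (lam - mu + of_nat m - 1))"
    by (simp add: algebra_simps)
  also have "of_real v * of_real v powr (lam - mu + of_nat m - 1) = of_real v powr (lam - mu + of_nat m + 1 - 1)"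
    using cpowr_shift_one[OF v] by (simp add: algebra_simps)
  finally show ?thesis using True by (simp add: Bf_def mult_ac)
qed (auto simp: Fv_def Bf_def)

lemma Fv_meas[measurable]: "Fv \<in> borel_measurable borel"
  unfolding Fv_def
  by (intro borel_measurable_continuous_on_indicator) (auto intro!: continuous_intros)

lemma Bf_int': "integrable lborel (Bf (lam - mu + of_nat m) (2*mu))"
  using mu lm by (intro Bf_int) auto

lemma Bf_int'': "integrable lborel (Bf (lam - mu + of_nat m + 1) (2*mu))"
  using mu lm by (intro Bf_int) auto

lemma term_int:
  "integrable lborel (\<lambda>v. \<alpha> * (of_real v ^ m * Fv v))"
  "integral\<^sup>L lborel (\<lambda>v. \<alpha> * (of_real v ^ m * Fv v)) =
     \<alpha> * (Beta (lam - mu + of_nat m) (2*mu) + Beta (lam - mu + of_nat m + 1) (2*mu))"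
proof -
  have i: "integrable lborel (\<lambda>v. of_real v ^ m * Fv v)"
    unfolding Fv_pow by (intro Bochner_Integration.integrable_add Bf_int' Bf_int'')
  then show "integrable lborel (\<lambda>v. \<alpha> * (of_real v ^ m * Fv v))" by simp
  have "integral\<^sup>L lborel (\<lambda>v. of_real v ^ m * Fv v) =
     Beta (lam - mu + of_nat m) (2*mu) + Beta (lam - mu + of_nat m + 1) (2*mu)"
    unfolding Fv_pow using mu lm
    by (subst Bochner_Integration.integral_add[OF Bf_int' Bf_int''])
       (simp add: Beta_complex_integral)
  then show "integral\<^sup>L lborel (\<lambda>v. \<alpha> * (of_real v ^ m * Fv v)) =
     \<alpha> * (Beta (lam - mu + of_nat m) (2*mu) + Beta (lam - mu + of_nat m + 1) (2*mu))"
    by simp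
qed

lemma Fv_int: "integrable lborel Fv"
  using term_int(1)[of 1 0] by simp

lemma Fv_supp: "Fv v \<noteq> 0 \<Longrightarrow> 0 < v \<and> v < 1"
  by (auto simp: Fv_def indicator_def split: if_splits)

end


context
  fixes lam mu c :: complex
  assumes mu: "0 < Re mu" and lm: "Re mu < Re lam"
begin

lemma series_integral_gen:
  fixes f :: "nat \<Rightarrow> complex \<Rightarrow> complex" and \<alpha> :: "nat \<Rightarrow> complex" and d :: "nat \<Rightarrow> nat" and E :: "nat \<Rightarrow> real"
  assumes bnd: "\<And>k v. Fv lam mu v \<noteq> 0 \<Longrightarrow> norm (f k (c * of_real v)) \<le> E k"
    and E0: "\<And>k. 0 \<le> E k" and sE: "summable E" and sf: "\<And>z. summable (\<lambda>k. norm (f k z))"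
    and fe: "\<And>k v. f k (c * of_real v) = \<alpha> k * of_real v ^ d k"
  shows "integrable lborel (\<lambda>v. Fv lam mu v * (\<Sum>k. f k (c * of_real v)))"
    "(\<lambda>k. \<alpha> k * (Beta (lam - mu + of_nat (d k)) (2*mu) + Beta (lam - mu + of_nat (d k) + 1) (2*mu))) sums
       integral\<^sup>L lborel (\<lambda>v. Fv lam mu v * (\<Sum>k. f k (c * of_real v)))"
    "integral\<^sup>L lborel (\<lambda>v. Fv lam mu v * (\<Sum>k. f k (c * of_real v))) =
       (\<Sum>k. \<alpha> k * (Beta (lam - mu + of_nat (d k)) (2*mu) + Beta (lam - mu + of_nat (d k) + 1) (2*mu)))"
proof -
  define g where "g = (\<lambda>k v. Fv lam mu v * f k (c * of_real v))"
  have eq: "Fv lam mu v * (\<Sum>k. f k (c * of_real v)) = (\<Sum>k. g k v)" for v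
    unfolding g_def by (rule suminf_mult[symmetric]) (rule summable_norm_cancel[OF sf])
  have g_alt: "g k = (\<lambda>v. \<alpha> k * (of_real v ^ d k * Fv lam mu v))" for k
    by (auto simp: g_def fe fun_eq_iff mult_ac)
  have gi: "integrable lborel (g k)" for k
    unfolding g_alt by (rule term_int(1)[OF mu lm])
  have gI: "integral\<^sup>L lborel (g k) = \<alpha> k * (Beta (lam - mu + of_nat (d k)) (2*mu) + Beta (lam - mu + of_nat (d k) + 1) (2*mu))" for k
    unfolding g_alt by (rule term_int(2)[OF mu lm])
  have gb: "norm (g k v) \<le> norm (Fv lam mu v) * E k" for k v
  proof (cases "Fv lam mu v = 0")
    case True then show ?thesis by (simp add: g_def)
  next
    case False then show ?thesis unfolding g_def norm_mult
      by (intro mult_left_mono bnd) auto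
  qed
  have Fi: "integrable lborel (Fv lam mu)" by (rule Fv_int[OF mu lm])
  have s1: "AE v in lborel. summable (\<lambda>k. norm (g k v))"
  proof (rule AE_I2)
    fix v
    show "summable (\<lambda>k. norm (g k v))"
      by (rule summable_comparison_test'[where N=0, OF summable_mult[OF sE, of "norm (Fv lam mu v)"]])
         (use gb in \<open>auto simp: mult_ac\<close>)
  qed
  have s2: "summable (\<lambda>k. integral\<^sup>L lborel (\<lambda>v. norm (g k v)))"
  proof (rule summable_comparison_test'[where N=0, OF summable_mult[OF sE, of "integral\<^sup>L lborel (\<lambda>v. norm (Fv lam mu v))"]])
    fix k :: nat
    have "integral\<^sup>L lborel (\<lambda>v. norm (g k v)) \<le> integral\<^sup>L lborel (\<lambda>v. norm (Fv lam mu v) * E k)"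
      by (intro integral_mono integrable_norm gi Bochner_Integration.integrable_mult_left Fi gb)
    also have "\<dots> = integral\<^sup>L lborel (\<lambda>v. norm (Fv lam mu v)) * E k" by simp
    finally show "norm (integral\<^sup>L lborel (\<lambda>v. norm (g k v))) \<le> integral\<^sup>L lborel (\<lambda>v. norm (Fv lam mu v)) * E k"
      by simp
  qed
  show "integrable lborel (\<lambda>v. Fv lam mu v * (\<Sum>k. f k (c * of_real v)))"
    unfolding eq by (rule integrable_suminf[OF gi s1 s2])
  show "integral\<^sup>L lborel (\<lambda>v. Fv lam mu v * (\<Sum>k. f k (c * of_real v))) =
       (\<Sum>k. \<alpha> k * (Beta (lam - mu + of_nat (d k)) (2*mu) + Beta (lam - mu + of_nat (d k) + 1) (2*mu)))"
    unfolding eq integral_suminf[OF gi s1 s2] gI ..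
  show "(\<lambda>k. \<alpha> k * (Beta (lam - mu + of_nat (d k)) (2*mu) + Beta (lam - mu + of_nat (d k) + 1) (2*mu))) sums
       integral\<^sup>L lborel (\<lambda>v. Fv lam mu v * (\<Sum>k. f k (c * of_real v)))"
    unfolding eq using sums_integral[OF gi s1 s2] gI by simp
qed

lemma ee_cv: "ee k (c * of_real v) = ((c/2)^(2*k) / (of_nat (fact k))^2) * of_real v ^ (2*k)"
  by (simp add: ee_def power_mult_distrib field_simps)

lemma od_cv: "od k (c * of_real v) = ((c/2)^(2*k+1) / (Gamma (of_nat k + 3/2))^2) * of_real v ^ (2*k+1)"
  by (simp add: od_def power_mult_distrib field_simps)

lemma bessel_part:
  shows "integrable lborel (\<lambda>v. Fv lam mu v * besselI0 (c * of_real v))"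
    "(\<lambda>k. ((c/2)^(2*k) / (of_nat (fact k))^2) * (Beta (lam - mu + of_nat (2*k)) (2*mu) + Beta (lam - mu + of_nat (2*k) + 1) (2*mu))) sums
       integral\<^sup>L lborel (\<lambda>v. Fv lam mu v * besselI0 (c * of_real v))"
    "integral\<^sup>L lborel (\<lambda>v. Fv lam mu v * besselI0 (c * of_real v)) =
       (\<Sum>k. ((c/2)^(2*k) / (of_nat (fact k))^2) * (Beta (lam - mu + of_nat (2*k)) (2*mu) + Beta (lam - mu + of_nat (2*k) + 1) (2*mu)))"
proof -
  have bnd: "norm (ee k (c * of_real v)) \<le> inverse (fact k) * (norm c ^ 2 / 4) ^ k" if "Fv lam mu v \<noteq> 0" for k v
  proof -
    from Fv_supp[OF mu lm that] have v: "0 < v" "v < 1" by auto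
    have "norm (c * of_real v) \<le> norm c" using v by (simp add: norm_mult mult_left_le)
    then have "(norm (c * of_real v) ^ 2 / 4) ^ k \<le> (norm c ^ 2 / 4) ^ k"
      by (intro power_mono divide_right_mono) (auto intro: power_mono)
    then have "inverse (fact k) * (norm (c * of_real v) ^ 2 / 4) ^ k \<le> inverse (fact k) * (norm c ^ 2 / 4) ^ k"
      by (intro mult_left_mono) auto
    then show ?thesis using ee_bound[of k "c * of_real v"] by linarith
  qed
  note * = series_integral_gen[where f = ee and E = "\<lambda>k. inverse (fact k) * (norm c ^ 2 / 4) ^ k"
      and \<alpha> = "\<lambda>k. (c/2)^(2*k) / (of_nat (fact k))^2" and d = "\<lambda>k. 2*k", OF bnd _ summable_expr summable_ee ee_cv]
  show "integrable lborel (\<lambda>v. Fv lam mu v * besselI0 (c * of_real v))"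
    using *(1) by (simp add: besselI0_ee)
  show "integral\<^sup>L lborel (\<lambda>v. Fv lam mu v * besselI0 (c * of_real v)) =
       (\<Sum>k. ((c/2)^(2*k) / (of_nat (fact k))^2) * (Beta (lam - mu + of_nat (2*k)) (2*mu) + Beta (lam - mu + of_nat (2*k) + 1) (2*mu)))"
    using *(3) by (simp add: besselI0_ee)
  show "(\<lambda>k. ((c/2)^(2*k) / (of_nat (fact k))^2) * (Beta (lam - mu + of_nat (2*k)) (2*mu) + Beta (lam - mu + of_nat (2*k) + 1) (2*mu))) sums
       integral\<^sup>L lborel (\<lambda>v. Fv lam mu v * besselI0 (c * of_real v))"
    using *(2) by (simp add: besselI0_ee)
qed

lemma struve_part:
  shows "integrable lborel (\<lambda>v. Fv lam mu v * struveL0 (c * of_real v))"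
    "(\<lambda>k. ((c/2)^(2*k+1) / (Gamma (of_nat k + 3/2))^2) * (Beta (lam - mu + of_nat (2*k+1)) (2*mu) + Beta (lam - mu + of_nat (2*k+1) + 1) (2*mu))) sums
       integral\<^sup>L lborel (\<lambda>v. Fv lam mu v * struveL0 (c * of_real v))"
    "integral\<^sup>L lborel (\<lambda>v. Fv lam mu v * struveL0 (c * of_real v)) =
       (\<Sum>k. ((c/2)^(2*k+1) / (Gamma (of_nat k + 3/2))^2) * (Beta (lam - mu + of_nat (2*k+1)) (2*mu) + Beta (lam - mu + of_nat (2*k+1) + 1) (2*mu)))"
proof -
  have bnd: "norm (od k (c * of_real v)) \<le> (norm c / 2) * (4 / pi) * (inverse (fact k) * (norm c ^ 2 / 4) ^ k)" if "Fv lam mu v \<noteq> 0" for k v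
  proof -
    from Fv_supp[OF mu lm that] have v: "0 < v" "v < 1" by auto
    have n: "norm (c * of_real v) \<le> norm c" using v by (simp add: norm_mult mult_left_le)
    then have "(norm (c * of_real v) ^ 2 / 4) ^ k \<le> (norm c ^ 2 / 4) ^ k"
      by (intro power_mono divide_right_mono) (auto intro: power_mono)
    then have "(norm (c * of_real v) / 2) * (4 / pi) * (inverse (fact k) * (norm (c * of_real v) ^ 2 / 4) ^ k)
        \<le> (norm c / 2) * (4 / pi) * (inverse (fact k) * (norm c ^ 2 / 4) ^ k)"
      using n by (intro mult_mono mult_left_mono) auto
    then show ?thesis using od_bound[of k "c * of_real v"] by linarith
  qed
  note * = series_integral_gen[where f = od and E = "\<lambda>k. (norm c / 2) * (4 / pi) * (inverse (fact k) * (norm c ^ 2 / 4) ^ k)"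
      and \<alpha> = "\<lambda>k. (c/2)^(2*k+1) / (Gamma (of_nat k + 3/2))^2" and d = "\<lambda>k. 2*k+1",
      OF bnd _ summable_mult[OF summable_expr] summable_od od_cv]
  show "integrable lborel (\<lambda>v. Fv lam mu v * struveL0 (c * of_real v))"
    using *(1) by (simp add: struveL0_od)
  show "integral\<^sup>L lborel (\<lambda>v. Fv lam mu v * struveL0 (c * of_real v)) =
       (\<Sum>k. ((c/2)^(2*k+1) / (Gamma (of_nat k + 3/2))^2) * (Beta (lam - mu + of_nat (2*k+1)) (2*mu) + Beta (lam - mu + of_nat (2*k+1) + 1) (2*mu)))"
    using *(3) by (simp add: struveL0_od)
  show "(\<lambda>k. ((c/2)^(2*k+1) / (Gamma (of_nat k + 3/2))^2) * (Beta (lam - mu + of_nat (2*k+1)) (2*mu) + Beta (lam - mu + of_nat (2*k+1) + 1) (2*mu))) sums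
       integral\<^sup>L lborel (\<lambda>v. Fv lam mu v * struveL0 (c * of_real v))"
    using *(2) by (simp add: struveL0_od)
qed

end


context
  fixes a :: real
  assumes a: "a > 0"
begin

definition gm :: "real \<Rightarrow> real" where "gm v = a * (1 - v)^2 / (2 * v)"
definition hm :: "real \<Rightarrow> real" where "hm v = - (a * (1 - v) * (1 + v)) / (2 * v^2)"
definition Dm :: "real \<Rightarrow> real" where "Dm x = x + a + sqrt (x^2 + 2 * a * x)"

lemma gm_deriv:
  assumes "v \<in> {0<..<1}" shows "(gm has_field_derivative hm v) (at v within {0<..<1})"
proof -
  have v: "v \<noteq> 0" using assms by auto
  show ?thesis
    unfolding gm_def hm_def
    apply (rule has_field_derivative_at_within)
    apply (rule derivative_eq_intros refl | simp add: v)+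
    using v apply (simp add: field_simps power2_eq_square)
    done
qed

lemma gm_div: "d > 0 \<Longrightarrow> gm (a / d) = (d - a)^2 / (2 * d)"
  using a by (simp add: gm_def field_simps power2_eq_square)

lemma gm_inj: "inj_on gm {0<..<1}"
proof (rule inj_onI)
  fix v w assume v: "v \<in> {0<..<1}" and w: "w \<in> {0<..<1}" and e: "gm v = gm w"
  from v w have "v > 0" "w > 0" "v < 1" "w < 1" by auto
  from e have "a * (1 - v)^2 * (2 * w) = a * (1 - w)^2 * (2 * v)"
    using \<open>v > 0\<close> \<open>w > 0\<close> by (simp add: gm_def field_simps)
  then have "(1 - v)^2 * w = (1 - w)^2 * v" using a by simp
  then have "(w - v) * (1 - v * w) = 0" by (simp add: algebra_simps power2_eq_square)
  moreover have "v * w < 1" using \<open>v > 0\<close> \<open>w > 0\<close> \<open>v < 1\<close> \<open>w < 1\<close>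
    by (metis mult_strict_mono' less_eq_real_def mult_1_right)
  ultimately show "v = w" by simp
qed

lemma Dm_gm: "v \<in> {0<..<1} \<Longrightarrow> Dm (gm v) = a / v"
proof -
  assume v: "v \<in> {0<..<1}"
  then have v0: "v > 0" "v < 1" by auto
  define r where "r = a * (1 - v) * (1 + v) / (2 * v)"
  have r0: "r \<ge> 0" using v0 a by (simp add: r_def)
  have "(gm v)^2 + 2 * a * gm v = r^2"
    using v0 by (simp add: gm_def r_def field_simps power2_eq_square)
  then have "sqrt ((gm v)^2 + 2 * a * gm v) = r" using r0 by simp
  then show ?thesis using v0 by (simp add: Dm_def gm_def r_def field_simps power2_eq_square)
qed

lemma Dm_pos: "x > 0 \<Longrightarrow> Dm x > a"
  using a by (simp add: Dm_def add_pos_nonneg)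

lemma gm_image: "gm ` {0<..<1} = {0<..}"
proof
  show "gm ` {0<..<1} \<subseteq> {0<..}"
    using a by (auto simp: gm_def)
next
  show "{0<..} \<subseteq> gm ` {0<..<1}"
  proof
    fix x :: real assume "x \<in> {0<..}"
    then have x: "x > 0" by simp
    define s where "s = sqrt (x^2 + 2 * a * x)"
    have s0: "s \<ge> 0" and s2: "s^2 = x^2 + 2 * a * x" using x a by (auto simp: s_def)
    have D: "Dm x = x + a + s" by (simp add: Dm_def s_def)
    have Dp: "x + a + s > a" using x s0 by simp
    have "a / Dm x \<in> {0<..<1}" using D Dp a by auto
    moreover have "gm (a / Dm x) = x"
    proof -
      have "gm (a / Dm x) = (x + s)^2 / (2 * (x + a + s))"
        using D Dp a gm_div[of "Dm x"] by simp
      also have "(x + s)^2 = 2 * x * (x + a + s)" using s2 by (simp add: power2_eq_square algebra_simps)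
      finally have "gm (a / Dm x) = 2 * x * (x + a + s) / (2 * (x + a + s))" .
      moreover have pos: "x + a + s > 0" using Dp a by linarith
      have "2 * x * (x + a + s) / (2 * (x + a + s)) = x"
        by (subst divide_eq_eq) (use pos in simp)
      ultimately show ?thesis by simp
    qed
    ultimately show "x \<in> gm ` {0<..<1}" by (metis image_eqI)
  qed
qed

end


lemma cof_exp: "x > 0 \<Longrightarrow> complex_of_real x = exp (of_real (ln x))"
  by (simp add: exp_of_real)

context
  fixes a :: real and lam mu :: complex
  assumes a: "a > 0"
begin

lemma ptwise:
  assumes v: "v \<in> {0<..<1}"
  shows "of_real \<bar>hm a v\<bar> * (of_real (gm a v) powr (mu-1) * of_real (Dm a (gm a v)) powr (-lam))
    = (of_real a powr (mu - lam) * 2 powr (-mu)) *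
      (of_real (1-v) powr (2*mu-1) * of_real v powr (lam-mu-1) * (1 + of_real v))"
proof -
  from v have v0: "0 < v" "v < 1" by auto
  have h: "\<bar>hm a v\<bar> = a * (1 - v) * (1 + v) / (2 * v^2)"
    using v0 a by (simp add: hm_def abs_if)
  define la where "la = ln a"
  define l1 where "l1 = ln (1 - v)"
  define l2 where "l2 = ln (1 + v)"
  define lv where "lv = ln v"
  define t where "t = ln (2::real)"
  have L1: "ln \<bar>hm a v\<bar> = la + l1 + l2 - t - 2 * lv"
    unfolding h using v0 a by (simp add: ln_mult ln_div la_def l1_def l2_def lv_def t_def ln_realpow)
  have L2: "ln (gm a v) = la + 2 * l1 - t - lv"
    using v0 a by (simp add: gm_def ln_mult ln_div la_def l1_def l2_def lv_def t_def ln_realpow)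
  have L3: "ln (Dm a (gm a v)) = la - lv"
    using v0 a by (simp add: Dm_gm[OF a v] ln_div la_def lv_def)
  have hp: "\<bar>hm a v\<bar> > 0" unfolding h using v0 a by simp
  have gp: "gm a v > 0" using v0 a by (simp add: gm_def)
  have dp: "Dm a (gm a v) > 0" using v0 a by (simp add: Dm_gm[OF a v])
  have "of_real \<bar>hm a v\<bar> * (of_real (gm a v) powr (mu-1) * of_real (Dm a (gm a v)) powr (-lam))
      = exp (of_real (la + l1 + l2 - t - 2 * lv)) * (exp ((mu-1) * of_real (la + 2 * l1 - t - lv)) * exp (-lam * of_real (la - lv)))"
    using hp gp dp by (simp only: cof_exp[OF hp] cpowr_pos L1 L2 L3)
  also have "\<dots> = exp (of_real (la + l1 + l2 - t - 2 * lv) + ((mu-1) * of_real (la + 2 * l1 - t - lv) + (-lam * of_real (la - lv))))"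
    by (simp only: exp_add)
  also have "\<dots> = exp (((mu - lam) * of_real la + (-mu) * of_real t) + ((2*mu-1) * of_real l1 + (lam-mu-1) * of_real lv + of_real l2))"
    by (rule arg_cong[where f=exp]) (simp add: algebra_simps)
  also have "\<dots> = (exp ((mu - lam) * of_real la) * exp ((-mu) * of_real t)) *
      (exp ((2*mu-1) * of_real l1) * exp ((lam-mu-1) * of_real lv) * exp (of_real l2))"
    by (simp only: exp_add)
  also have "\<dots> = (of_real a powr (mu - lam) * 2 powr (-mu)) *
      (of_real (1-v) powr (2*mu-1) * of_real v powr (lam-mu-1) * (1 + of_real v))"
  proof -
    have "exp (of_real l2) = (1 + of_real v :: complex)" using v0 by (simp add: l2_def exp_of_real)
    moreover have "exp ((-mu) * of_real t) = (2::complex) powr (-mu)"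
      using cpowr_pos[of 2 "-mu"] by (simp add: t_def)
    moreover have "exp ((mu - lam) * of_real la) = of_real a powr (mu - lam)"
      using cpowr_pos[OF a] by (simp add: la_def)
    moreover have "exp ((2*mu-1) * of_real l1) = of_real (1-v) powr (2*mu-1)"
      using cpowr_pos[of "1-v"] v0 by (simp add: l1_def)
    moreover have "exp ((lam-mu-1) * of_real lv) = of_real v powr (lam-mu-1)"
      using cpowr_pos[of v] v0 by (simp add: lv_def)
    ultimately show ?thesis by simp
  qed
  finally show ?thesis .
qed

end


lemma subst_main:
  fixes a :: real and lam mu y :: complex
  assumes a: "a > 0" and mu: "0 < Re mu" and lm: "Re mu < Re lam"
  defines "c \<equiv> y / of_real a"
    and "f \<equiv> \<lambda>x. of_real x powr (mu-1) * of_real (Dm a x) powr (-lam)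
                  * (besselI0 (y / of_real (Dm a x)) + struveL0 (y / of_real (Dm a x)))"
  shows "f absolutely_integrable_on {0<..}"
    "integral {0<..} f = (of_real a powr (mu - lam) * 2 powr (-mu)) *
       (integral\<^sup>L lborel (\<lambda>v. Fv lam mu v * besselI0 (c * of_real v)) +
        integral\<^sup>L lborel (\<lambda>v. Fv lam mu v * struveL0 (c * of_real v)))"
proof -
  define K where "K = of_real a powr (mu - lam) * (2::complex) powr (-mu)"
  define A where "A = (\<lambda>v. Fv lam mu v * besselI0 (c * of_real v))"
  define B where "B = (\<lambda>v. Fv lam mu v * struveL0 (c * of_real v))"
  define \<Phi> where "\<Phi> = (\<lambda>v. K * (A v + B v))"
  define S where "S = {0<..<(1::real)}"
  have Ai: "integrable lborel A" unfolding A_def by (rule bessel_part(1)[OF mu lm])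
  have Bi: "integrable lborel B" unfolding B_def by (rule struve_part(1)[OF mu lm])
  have \<Phi>i: "integrable lborel \<Phi>" unfolding \<Phi>_def using Ai Bi by simp
  have \<Phi>I: "integral\<^sup>L lborel \<Phi> = K * (integral\<^sup>L lborel A + integral\<^sup>L lborel B)"
    unfolding \<Phi>_def using Ai Bi by simp
  have \<Phi>m: "\<Phi> \<in> borel_measurable lborel" using \<Phi>i by (rule borel_measurable_integrable)
  have eq\<Phi>: "(\<lambda>v. indicator S v *\<^sub>R (\<bar>hm a v\<bar> *\<^sub>R f (gm a v))) = \<Phi>"
  proof
    fix v :: real
    show "indicator S v *\<^sub>R (\<bar>hm a v\<bar> *\<^sub>R f (gm a v)) = \<Phi> v"
    proof (cases "v \<in> S")
      case True
      then have v0: "0 < v" "v < 1" by (auto simp: S_def)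
      have Dg: "Dm a (gm a v) = a / v" using True a by (simp add: S_def Dm_gm)
      have yc: "y / of_real (Dm a (gm a v)) = c * of_real v"
        using v0 a by (simp add: Dg c_def field_simps)
      have "indicator S v *\<^sub>R (\<bar>hm a v\<bar> *\<^sub>R f (gm a v)) =
          (of_real \<bar>hm a v\<bar> * (of_real (gm a v) powr (mu-1) * of_real (Dm a (gm a v)) powr (-lam)))
          * (besselI0 (c * of_real v) + struveL0 (c * of_real v))"
        using True by (simp add: f_def yc scaleR_conv_of_real mult_ac)
      also have "\<dots> = K * ((of_real (1-v) powr (2*mu-1) * of_real v powr (lam-mu-1) * (1 + of_real v))
          * (besselI0 (c * of_real v) + struveL0 (c * of_real v)))"
        using ptwise[OF a, of v mu lam] True by (simp add: S_def K_def)
      also have "\<dots> = \<Phi> v"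
      proof -
        have Fvv: "Fv lam mu v = of_real (1-v) powr (2*mu-1) * of_real v powr (lam-mu-1) * (1 + of_real v)"
          using v0 by (simp add: Fv_def[OF mu lm])
        show ?thesis by (simp add: \<Phi>_def A_def B_def Fvv distrib_left)
      qed
      finally show ?thesis .
    next
      case False
      then have "Fv lam mu v = 0" by (auto simp: Fv_def[OF mu lm] S_def)
      with False show ?thesis by (simp add: \<Phi>_def A_def B_def)
    qed
  qed
  have Sl: "S \<in> sets lebesgue" by (simp add: S_def)
  have ai: "(\<lambda>v. \<bar>hm a v\<bar> *\<^sub>R f (gm a v)) absolutely_integrable_on S"
    unfolding set_integrable_def eq\<Phi> using \<Phi>i \<Phi>m by (simp add: integrable_completion)
  have iv: "integral S (\<lambda>v. \<bar>hm a v\<bar> *\<^sub>R f (gm a v)) = K * (integral\<^sup>L lborel A + integral\<^sup>L lborel B)"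
    using set_lebesgue_integral_eq_integral(2)[OF ai]
    unfolding set_lebesgue_integral_def eq\<Phi> using \<Phi>m \<Phi>I by (simp add: integral_completion)
  note cv = has_absolute_integral_change_of_variables_real[OF Sl, of "gm a" "hm a" f]
  have "f absolutely_integrable_on gm a ` S \<and> integral (gm a ` S) f = K * (integral\<^sup>L lborel A + integral\<^sup>L lborel B)"
    using cv gm_deriv[OF a] gm_inj[OF a] ai iv by (auto simp: S_def)
  then show "f absolutely_integrable_on {0<..}"
    "integral {0<..} f = (of_real a powr (mu - lam) * 2 powr (-mu)) *
       (integral\<^sup>L lborel (\<lambda>v. Fv lam mu v * besselI0 (c * of_real v)) +
        integral\<^sup>L lborel (\<lambda>v. Fv lam mu v * struveL0 (c * of_real v)))"
    by (simp_all add: S_def gm_image[OF a] K_def A_def B_def)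
qed



lemma wr: "wrightPsi [(1/2, 1/2), (lam + 1, 1), (lam - mu, 1)]
                     [(1, 1/2), (lam, 1), (1 + lam + mu, 1)] z = (\<Sum>n. Gamma (1/2 + of_nat n / 2) * Gamma (lam + 1 + of_nat n) * Gamma (lam - mu + of_nat n) / (Gamma (1 + of_nat n / 2) * Gamma (lam + of_nat n) * Gamma (1 + lam + mu + of_nat n)) * z ^ n / fact n)"
  by (simp add: wrightPsi_def mult.assoc)

lemma notnpi: "Re z > 0 \<Longrightarrow> z \<notin> \<int>\<^sub>\<le>\<^sub>0"
  using Gamma_nz_re by (auto simp: Gamma_eq_zero_iff)

lemma term_identity:
  fixes lam mu c r :: complex and m :: nat and a :: real
  assumes a: "a > 0" and mu: "0 < Re mu" and lm: "Re mu < Re lam"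
  assumes dup: "Gamma (1/2 + of_nat m / 2) * 2^m = of_real (sqrt pi) * Gamma (1 + of_nat m / 2) * fact m * r"
  shows "2 powr (1 - mu) * of_real a powr (mu - lam) * Gamma (2*mu) / of_real (sqrt pi) *
   (Gamma (1/2 + of_nat m / 2) * Gamma (lam + 1 + of_nat m) * Gamma (lam - mu + of_nat m) / (Gamma (1 + of_nat m / 2) * Gamma (lam + of_nat m) * Gamma (1 + lam + mu + of_nat m)) * c ^ m / fact m)
  = (of_real a powr (mu - lam) * 2 powr (-mu)) * ((c/2)^m * r * (Beta (lam - mu + of_nat m) (2*mu) + Beta (lam - mu + of_nat m + 1) (2*mu)))"
proof -
  define L where "L = lam - mu + of_nat m"
  have ReL: "Re L > 0" using lm by (simp add: L_def)
  have G1: "Gamma (lam + 1 + of_nat m) = (lam + of_nat m) * Gamma (lam + of_nat m)"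
    using Gamma_plus1[of "lam + of_nat m"] notnpi[of "lam + of_nat m"] mu lm by (simp add: add_ac)
  have G2: "Gamma (L + 1) = L * Gamma L"
    using Gamma_plus1[of L] notnpi[OF ReL] by simp
  have G3: "Gamma (1 + lam + mu + of_nat m) = (lam + mu + of_nat m) * Gamma (lam + mu + of_nat m)"
    using Gamma_plus1[of "lam + mu + of_nat m"] notnpi[of "lam + mu + of_nat m"] mu lm by (simp add: add_ac)
  have nz1: "Gamma (lam + mu + of_nat m) \<noteq> 0" using mu lm by (intro Gamma_nz_re) simp
  have nz2: "Gamma (lam + of_nat m) \<noteq> 0" using mu lm by (intro Gamma_nz_re) simp
  have nz3: "Gamma (1 + of_nat m / 2 :: complex) \<noteq> 0" by (intro Gamma_nz_re) simp
  have r4: "Re (lam + mu + of_nat m) > 0" using mu lm by simp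
  have nz4: "lam + mu + of_nat m \<noteq> 0" using r4 by force
  have nz5: "Gamma (1 + lam + mu + of_nat m) \<noteq> 0" using mu lm by (intro Gamma_nz_re) simp
  have sp: "of_real (sqrt pi) \<noteq> (0::complex)" by simp
  define p where "p = lam + mu + of_nat m"
  have Gp: "Gamma (p + 1) = p * Gamma p" using G3 by (simp add: p_def add_ac)
  have nzp: "p \<noteq> 0" "Gamma p \<noteq> 0" using nz1 nz4 by (simp_all add: p_def)
  have Bs0: "Beta L (2*mu) + Beta (L + 1) (2*mu) = Gamma L * Gamma (2*mu) * (p + L) / (p * Gamma p)"
  proof -
    have e1: "L + 2 * mu = p" by (simp add: L_def p_def)
    have e2: "L + 1 + 2 * mu = p + 1" by (simp add: L_def p_def)
    show ?thesis unfolding Beta_def e1 e2 G2 Gp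
      using nzp by (simp add: field_simps)
  qed
  have pL: "p + L = 2 * (lam + of_nat m)" by (simp add: p_def L_def)
  have Bs: "Beta L (2*mu) + Beta (L + 1) (2*mu) = 2 * (lam + of_nat m) * Gamma L * Gamma (2*mu) / Gamma (1 + lam + mu + of_nat m)"
    unfolding Bs0 pL using Gp by (simp add: p_def add_ac mult_ac)
  have p2: "(2::complex) powr (1 - mu) = 2 * 2 powr (-mu)"
    by (simp add: powr_diff powr_minus divide_inverse)
  have GG: "Gamma (1/2 + of_nat m / 2) = of_real (sqrt pi) * Gamma (1 + of_nat m / 2) * fact m * r / 2^m"
    using dup by (simp add: field_simps)
  show ?thesis
    unfolding GG G1 p2 Bs[unfolded L_def]
    using nz1 nz2 nz3 nz4 nz5 sp by (simp add: field_simps L_def power_divide)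
qed



lemma exp_ln2n: "exp (of_nat n * complex_of_real (ln 2)) = 2 ^ n"
proof -
  have "exp (complex_of_real (ln 2)) = 2" by (simp add: exp_of_real)
  then show ?thesis by (simp add: exp_of_nat_mult)
qed

lemma exp_trick: "X = exp (- w) * Y * Z \<Longrightarrow> X * exp w = (Y * Z :: complex)"
  by (simp add: exp_minus field_simps)

lemma dupE: "Gamma (1/2 + of_nat (2*k) / 2) * 2^(2*k) =
   of_real (sqrt pi) * Gamma (1 + of_nat (2*k) / 2) * fact (2*k) * (1 / (of_nat (fact k))^2 :: complex)"
proof -
  define z :: complex where "z = of_nat k + 1/2"
  have z1: "z \<notin> \<int>\<^sub>\<le>\<^sub>0" by (rule notnpi) (simp add: z_def)
  have z2: "z + 1/2 \<notin> \<int>\<^sub>\<le>\<^sub>0" by (rule notnpi) (simp add: z_def)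
  have D: "Gamma z * Gamma (z + 1/2) = exp ((1 - 2*z) * of_real (ln 2)) * of_real (sqrt pi) * Gamma (2*z)"
    by (rule Gamma_legendre_duplication[OF z1 z2])
  have a1: "z + 1/2 = 1 + of_nat k" by (simp add: z_def)
  have a2: "2 * z = 1 + of_nat (2*k)" by (simp add: z_def)
  have a3: "(1 - 2*z) * of_real (ln 2) = - (of_nat (2*k) * complex_of_real (ln 2))" by (simp add: z_def algebra_simps)
  have "Gamma z * fact k = exp (- (of_nat (2*k) * complex_of_real (ln 2))) * of_real (sqrt pi) * fact (2*k)"
    using D[unfolded a3, unfolded a1 a2 Gamma_fact] .
  from exp_trick[OF this] have "Gamma z * fact k * 2^(2*k) = of_real (sqrt pi) * fact (2*k)"
    unfolding exp_ln2n .
  moreover have "1/2 + of_nat (2*k) / 2 = z" by (simp add: z_def)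
  moreover have "1 + of_nat (2*k) / 2 = 1 + (of_nat k :: complex)" by simp
  ultimately show ?thesis by (simp add: Gamma_fact field_simps power2_eq_square)
qed

lemma dupO: "Gamma (1/2 + of_nat (2*k+1) / 2) * 2^(2*k+1) =
   of_real (sqrt pi) * Gamma (1 + of_nat (2*k+1) / 2) * fact (2*k+1) * (1 / (Gamma (of_nat k + 3/2))^2 :: complex)"
proof -
  define z :: complex where "z = of_nat k + 1"
  have z1: "z \<notin> \<int>\<^sub>\<le>\<^sub>0" by (rule notnpi) (simp add: z_def)
  have z2: "z + 1/2 \<notin> \<int>\<^sub>\<le>\<^sub>0" by (rule notnpi) (simp add: z_def)
  have D: "Gamma z * Gamma (z + 1/2) = exp ((1 - 2*z) * of_real (ln 2)) * of_real (sqrt pi) * Gamma (2*z)"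
    by (rule Gamma_legendre_duplication[OF z1 z2])
  have a1: "z + 1/2 = of_nat k + 3/2" by (simp add: z_def)
  have a0: "z = 1 + of_nat k" by (simp add: z_def)
  have a2: "2 * z = 1 + of_nat (2*k+1)" by (simp add: z_def)
  have a3: "(1 - 2*z) * of_real (ln 2) = - (of_nat (2*k+1) * complex_of_real (ln 2))" by (simp add: z_def algebra_simps)
  have "fact k * Gamma (of_nat k + 3/2) = exp (- (of_nat (2*k+1) * complex_of_real (ln 2))) * of_real (sqrt pi) * fact (2*k+1)"
    using D[unfolded a3, unfolded a1 a2 Gamma_fact, unfolded a0 Gamma_fact] by (simp add: mult_ac)
  from exp_trick[OF this] have e: "fact k * Gamma (of_nat k + 3/2) * 2^(2*k+1) = of_real (sqrt pi) * (fact (2*k+1) :: complex)"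
    unfolding exp_ln2n .
  have nz: "Gamma (of_nat k + 3/2 :: complex) \<noteq> 0" by (intro Gamma_nz_re) simp
  have b1: "1/2 + of_nat (2*k+1) / 2 = 1 + (of_nat k :: complex)" by (simp add: field_simps)
  have b2: "1 + of_nat (2*k+1) / 2 = (of_nat k + 3/2 :: complex)" by (simp add: field_simps)
  show ?thesis unfolding b1 b2 Gamma_fact using e nz by (simp add: field_simps power2_eq_square)
qed



lemma sums_even_odd:
  fixes f :: "nat \<Rightarrow> 'a::real_normed_vector"
  assumes E: "(\<lambda>k. f (2*k)) sums A" and O: "(\<lambda>k. f (2*k+1)) sums B"
  shows "f sums (A + B)"
proof -
  have ps: "(\<Sum>n<2*m. f n) = (\<Sum>k<m. f (2*k)) + (\<Sum>k<m. f (2*k+1))" for m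
    by (induction m) (simp_all add: algebra_simps)
  have L1: "(\<lambda>m. \<Sum>n<2*m. f n) \<longlonglongrightarrow> A + B"
    unfolding ps using E O unfolding sums_def by (intro tendsto_add)
  have f0: "(\<lambda>m. f (2*m)) \<longlonglongrightarrow> 0"
    using E by (simp add: sums_iff summable_LIMSEQ_zero)
  have L2: "(\<lambda>m. \<Sum>n<2*m+1. f n) \<longlonglongrightarrow> A + B"
  proof -
    have "(\<lambda>m. (\<Sum>n<2*m. f n) + f (2*m)) \<longlonglongrightarrow> A + B + 0"
      by (intro tendsto_add L1 f0)
    then show ?thesis by simp
  qed
  show ?thesis unfolding sums_def
  proof (rule tendstoI)
    fix e :: real assume e: "e > 0"
    from tendstoD[OF L1 e] obtain N1 where N1: "\<And>m. m \<ge> N1 \<Longrightarrow> dist (\<Sum>n<2*m. f n) (A + B) < e"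
      by (auto simp: eventually_sequentially)
    from tendstoD[OF L2 e] obtain N2 where N2: "\<And>m. m \<ge> N2 \<Longrightarrow> dist (\<Sum>n<2*m+1. f n) (A + B) < e"
      by (auto simp: eventually_sequentially)
    show "eventually (\<lambda>n. dist (\<Sum>i<n. f i) (A + B) < e) sequentially"
      unfolding eventually_sequentially
    proof (intro exI allI impI)
      fix n assume n: "2 * (N1 + N2) \<le> n"
      show "dist (\<Sum>i<n. f i) (A + B) < e"
      proof (cases "even n")
        case True
        then obtain m where "n = 2*m" by (auto elim: evenE)
        with n N1[of m] show ?thesis by simp
      next
        case False
        then obtain m where "n = 2*m+1" by (auto elim: oddE)
        with n N2[of m] show ?thesis by simp
      qed
    qed
  qed
qed



theorem theorem3:
  fixes a :: real and lam mu y :: complex and D :: "real \<Rightarrow> real"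
  assumes "a > 0"
    and "0 < Re mu" and "Re mu < Re lam"
    and "\<And>x. D x = x + a + sqrt (x\<^sup>2 + 2 * a * x)"
  shows "(LBINT x:{0<..}. (of_real x) powr (mu - 1) * (of_real (D x)) powr (- lam)
            * (besselI0 (y / of_real (D x)) + struveL0 (y / of_real (D x))))
       = 2 powr (1 - mu) * (of_real a) powr (mu - lam) * Gamma (2 * mu) / of_real (sqrt pi)
         * wrightPsi [(1/2, 1/2), (lam + 1, 1), (lam - mu, 1)]
                     [(1, 1/2), (lam, 1), (1 + lam + mu, 1)] (y / of_real a)"
proof -
  note a = assms(1) and mu = assms(2) and lm = assms(3)
  have Deq: "D = Dm a" using assms(4) by (auto simp: fun_eq_iff Dm_def[OF a])
  define c where "c = y / of_real a"
  define f where "f = (\<lambda>x. of_real x powr (mu-1) * of_real (Dm a x) powr (-lam)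
                  * (besselI0 (y / of_real (Dm a x)) + struveL0 (y / of_real (Dm a x))))"
  define K where "K = of_real a powr (mu - lam) * (2::complex) powr (-mu)"
  define IA where "IA = integral\<^sup>L lborel (\<lambda>v. Fv lam mu v * besselI0 (c * of_real v))"
  define IB where "IB = integral\<^sup>L lborel (\<lambda>v. Fv lam mu v * struveL0 (c * of_real v))"
  have fa: "f absolutely_integrable_on {0<..}" unfolding f_def by (rule subst_main(1)[OF a mu lm])
  have fI: "integral {0<..} f = K * (IA + IB)"
    unfolding f_def K_def IA_def IB_def c_def by (rule subst_main(2)[OF a mu lm])
  have meas1: "(\<lambda>x. indicator {0<..} x *\<^sub>R (of_real x powr (mu-1) * of_real (Dm a x) powr (-lam) :: complex))
      \<in> borel_measurable borel"
  proof (intro borel_measurable_continuous_on_indicator)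
    have c1: "continuous_on {0<..} (\<lambda>x. complex_of_real x powr (mu - 1))"
      by (rule continuous_on_powr_complex) (auto intro!: continuous_intros)
    have c2: "continuous_on {0<..} (\<lambda>x. complex_of_real (Dm a x) powr (-lam))"
    proof (rule continuous_on_powr_complex)
      show "{0<..} \<subseteq> {z. 0 \<le> Re (complex_of_real (Dm a z)) \<or> Im (complex_of_real (Dm a z)) \<noteq> 0}"
        using Dm_pos[OF a] a by (auto intro: less_imp_le order.strict_trans)
      show "\<And>z. z \<in> {0<..} \<Longrightarrow> complex_of_real (Dm a z) = 0 \<Longrightarrow> 0 < Re (- lam)"
        using Dm_pos[OF a] a by force
      show "continuous_on {0<..} (\<lambda>x. complex_of_real (Dm a x))"
        unfolding Dm_def[OF a] by (intro continuous_intros)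
    qed (intro continuous_intros)
    show "continuous_on {0<..} (\<lambda>x. of_real x powr (mu-1) * of_real (Dm a x) powr (-lam) :: complex)"
      by (intro continuous_on_mult c1 c2)
  qed simp
  have meas2: "(\<lambda>x. besselI0 (y / of_real (Dm a x)) + struveL0 (y / of_real (Dm a x))) \<in> borel_measurable borel"
    unfolding Dm_def[OF a] by measurable
  have meas: "(\<lambda>x. indicator {0<..} x *\<^sub>R f x) \<in> borel_measurable borel"
  proof -
    have eq: "(\<lambda>x. indicator {0<..} x *\<^sub>R f x) = (\<lambda>x. (indicator {0<..} x *\<^sub>R (of_real x powr (mu-1) * of_real (Dm a x) powr (-lam) :: complex))
        * (besselI0 (y / of_real (Dm a x)) + struveL0 (y / of_real (Dm a x))))"
      by (auto simp: f_def fun_eq_iff indicator_def)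
    have m3: "(\<lambda>x. (indicator {0<..} x *\<^sub>R (of_real x powr (mu-1) * of_real (Dm a x) powr (-lam) :: complex))
        * (besselI0 (y / of_real (Dm a x)) + struveL0 (y / of_real (Dm a x)))) \<in> borel_measurable borel"
      by (rule borel_measurable_times[OF meas1 meas2])
    show ?thesis unfolding eq by (rule m3)
  qed
  have fsi: "set_integrable lborel {0<..} f"
    using fa meas unfolding set_integrable_def by (simp add: integrable_completion)
  have LHS: "(LBINT x:{0<..}. f x) = K * (IA + IB)"
    using set_borel_integral_eq_integral(2)[OF fsi] fI by simp
  define C where "C = 2 powr (1 - mu) * (of_real a) powr (mu - lam) * Gamma (2 * mu) / (of_real (sqrt pi) :: complex)"
  define W where "W = (\<lambda>n. Gamma (1/2 + of_nat n / 2) * Gamma (lam + 1 + of_nat n) * Gamma (lam - mu + of_nat n) / (Gamma (1 + of_nat n / 2) * Gamma (lam + of_nat n) * Gamma (1 + lam + mu + of_nat n)) * c ^ n / fact n)"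
  have SA: "(\<lambda>k. C * W (2*k)) sums (K * IA)"
  proof -
    have "(\<lambda>k. K * (((c/2)^(2*k) / (of_nat (fact k))^2) * (Beta (lam - mu + of_nat (2*k)) (2*mu) + Beta (lam - mu + of_nat (2*k) + 1) (2*mu)))) sums (K * IA)"
      unfolding IA_def by (intro sums_mult bessel_part(2)[OF mu lm])
    moreover have "C * W (2*k) = K * (((c/2)^(2*k) / (of_nat (fact k))^2) * (Beta (lam - mu + of_nat (2*k)) (2*mu) + Beta (lam - mu + of_nat (2*k) + 1) (2*mu)))" for k
      using term_identity[OF a mu lm dupE[of k], of c] by (simp add: C_def W_def K_def)
    ultimately show ?thesis by simp
  qed
  have SB: "(\<lambda>k. C * W (2*k+1)) sums (K * IB)"
  proof -
    have "(\<lambda>k. K * (((c/2)^(2*k+1) / (Gamma (of_nat k + 3/2))^2) * (Beta (lam - mu + of_nat (2*k+1)) (2*mu) + Beta (lam - mu + of_nat (2*k+1) + 1) (2*mu)))) sums (K * IB)"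
      unfolding IB_def by (intro sums_mult struve_part(2)[OF mu lm])
    moreover have "C * W (2*k+1) = K * (((c/2)^(2*k+1) / (Gamma (of_nat k + 3/2))^2) * (Beta (lam - mu + of_nat (2*k+1)) (2*mu) + Beta (lam - mu + of_nat (2*k+1) + 1) (2*mu)))" for k
      using term_identity[OF a mu lm dupO[of k], of c] by (simp add: C_def W_def K_def)
    ultimately show ?thesis by simp
  qed
  have S: "(\<lambda>n. C * W n) sums (K * (IA + IB))"
    using sums_even_odd[OF SA SB] by (simp add: distrib_left)
  have Cnz: "C \<noteq> 0"
    using Gamma_nz_re[of "2*mu"] mu a by (simp add: C_def powr_def)
  have "W sums (K * (IA + IB) / C)"
    using S Cnz sums_mult_iff[OF Cnz, of W "K * (IA + IB) / C"] by simp
  then have "C * suminf W = K * (IA + IB)" using Cnz by (simp add: sums_iff)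
  then show ?thesis
    unfolding Deq LHS[unfolded f_def] wr W_def C_def c_def by simp
qed


end
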